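(* Let $m\in\mathbb{N}$ and let $d_1,\ldots,d_m$ and $l_1,\ldots,l_m$ be positive integers. For every partition of $\mathbb{N}$ into finitely many pairwise disjoint parts, there exist polynomials $P_1,\ldots,P_m$, with $P_i$ of degree exactly $d_i$ and with nonnegative integer coefficients, and one part $A$ of the partition such that $P_i(j)\in A$ for all $i=1,\ldots,m$ and $j=1,\ldots,l_i$. Moreover, the same conclusion holds with $A$ replaced by any given piecewise syndetic set $A\subseteq\mathbb{N}$.
   Context: $\mathbb{N}=\{1,2,3,\ldots\}$. A set $A\subseteq\mathbb{N}$ is piecewise syndetic if there is $b\in\mathbb{N}$ such that for every $n\in\mathbb{N}$ there is an interval $\{x,x+1,\ldots,x+n\}$ such that every $y$ in this interval satisfies $\{y,y+1,\ldots,y+b\}\cap A\neq\emptyset$; equivalently, $A$ belongs to some ultrafilter in the smallest ideal $K(\beta\mathbb{N})$ of $(\beta\mathbb{N},+)$. *)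

theory Defs
  imports "HOL-Computational_Algebra.Polynomial"
begin

text \<open>Positive integers N = {1,2,...} are represented as the subset {1..} of nat.\<close>

definition piecewise_syndetic :: "nat set \<Rightarrow> bool" where
  "piecewise_syndetic A \<longleftrightarrow> A \<subseteq> {1..} \<and>
     (\<exists>b\<ge>1. \<forall>n\<ge>1. \<exists>x\<ge>1. \<forall>y\<in>{x..x+n}. {y..y+b} \<inter> A \<noteq> {})"

definition finite_partition_of_N :: "nat set set \<Rightarrow> bool" where
  "finite_partition_of_N \<P> \<longleftrightarrow> finite \<P> \<and> \<Union>\<P> = {1..} \<and>
     (\<forall>A\<in>\<P>. \<forall>B\<in>\<P>. A \<noteq> B \<longrightarrow> A \<inter> B = {})"

end

theory Submission
  imports Defs
begin

lemma blk_bound: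
  fixes j t n B :: nat
  assumes "j < B" "t < n"
  shows "j*n + t < B*n"
proof -
  have "j*n + t < Suc j * n" using assms(2) by simp
  also have "Suc j * n \<le> B * n" using assms(1) by (intro mult_le_mono1) simp
  finally show ?thesis .
qed

lemma vdW_gen:
  fixes L :: nat
  assumes IH: "\<forall>r. \<exists>N. \<forall>f::nat\<Rightarrow>nat. (\<forall>x<N. f x < r) \<longrightarrow>
      (\<exists>a e. e>0 \<and> a + L*e < N \<and> e \<le> N \<and> (\<forall>k\<le>L. f(a+k*e) = f a))"
    and fin: "finite C"
  shows "\<exists>N. \<forall>f::nat\<Rightarrow>'a. (\<forall>x<N. f x \<in> C) \<longrightarrow>
      (\<exists>a e. e>0 \<and> a + L*e < N \<and> e \<le> N \<and> (\<forall>k\<le>L. f(a+k*e) = f a))"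
proof -
  obtain h :: "'a \<Rightarrow> nat" and n where h: "h ` C = {i. i<n}" "inj_on h C"
    using finite_imp_inj_to_nat_seg[OF fin] by blast
  obtain N where N: "\<forall>f::nat\<Rightarrow>nat. (\<forall>x<N. f x < n) \<longrightarrow>
      (\<exists>a e. e>0 \<and> a + L*e < N \<and> e \<le> N \<and> (\<forall>k\<le>L. f(a+k*e) = f a))"
    using IH by blast
  show ?thesis
  proof (rule exI[of _ N], intro allI impI)
    fix f :: "nat\<Rightarrow>'a" assume f: "\<forall>x<N. f x \<in> C"
    have "\<forall>x<N. (h o f) x < n" using f h(1) by auto
    then obtain a e where ae: "e>0" "a + L*e < N" "e \<le> N" "\<forall>k\<le>L. (h o f)(a+k*e) = (h o f) a"
      using N[rule_format, of "h o f"] by blast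
    have "\<forall>k\<le>L. f(a+k*e) = f a"
    proof (intro allI impI)
      fix k assume k: "k \<le> L"
      have "k*e \<le> L*e" using k by (rule mult_le_mono1)
      then have "a + k*e < N" "a < N" using ae by linarith+
      then show "f(a+k*e) = f a" using ae(4) k h(2) f by (auto simp: inj_on_eq_iff)
    qed
    then show "\<exists>a e. e>0 \<and> a + L*e < N \<and> e \<le> N \<and> (\<forall>k\<le>L. f(a+k*e) = f a)"
      using ae by blast
  qed
qed

lemma focus:
  fixes L r s :: nat
  assumes IH: "\<forall>r. \<exists>N. \<forall>f::nat\<Rightarrow>nat. (\<forall>x<N. f x < r) \<longrightarrow>
      (\<exists>a e. e>0 \<and> a + L*e < N \<and> e \<le> N \<and> (\<forall>k\<le>L. f(a+k*e) = f a))"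
  shows "\<exists>N. \<forall>f::nat\<Rightarrow>nat. (\<forall>x<N. f x < r) \<longrightarrow>
   (\<exists>x d. d>0 \<and> x + Suc L*d < N \<and> (\<forall>k\<le>Suc L. f(x+k*d) = f x)) \<or>
   (\<exists>z xs ds. z < N \<and> (\<forall>i<s. ds i > 0 \<and> xs i + Suc L * ds i = z \<and>
        (\<forall>k\<le>L. f(xs i + k*ds i) = f(xs i))) \<and> inj_on (\<lambda>i. f (xs i)) {..<s})"
proof (induction s)
  case 0
  show ?case
    by (rule exI[of _ 1]) auto
next
  case (Suc s)
  then obtain n where n: "\<forall>f::nat\<Rightarrow>nat. (\<forall>x<n. f x < r) \<longrightarrow>
   (\<exists>x d. d>0 \<and> x + Suc L*d < n \<and> (\<forall>k\<le>Suc L. f(x+k*d) = f x)) \<or>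
   (\<exists>z xs ds. z < n \<and> (\<forall>i<s. ds i > 0 \<and> xs i + Suc L * ds i = z \<and>
        (\<forall>k\<le>L. f(xs i + k*ds i) = f(xs i))) \<and> inj_on (\<lambda>i. f (xs i)) {..<s})"
    by blast
  define C where "C = {xs::nat list. set xs \<subseteq> {..<r} \<and> length xs = n}"
  have finC: "finite C" unfolding C_def by (rule finite_lists_length_eq) simp
  obtain M where M: "\<forall>g::nat\<Rightarrow>nat list. (\<forall>x<M. g x \<in> C) \<longrightarrow>
      (\<exists>a e. e>0 \<and> a + L*e < M \<and> e \<le> M \<and> (\<forall>k\<le>L. g(a+k*e) = g a))"
    using vdW_gen[OF IH finC] by blast
  show ?case
  proof (rule exI[of _ "2*M*n"], intro allI impI)
    fix f :: "nat \<Rightarrow> nat" assume f: "\<forall>x<2*M*n. f x < r"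
    define g where "g j = map (\<lambda>t. f(j*n+t)) [0..<n]" for j
    have "\<forall>j<M. g j \<in> C"
    proof (intro allI impI)
      fix j assume j: "j < M"
      have "\<forall>t<n. f(j*n+t) < r"
      proof (intro allI impI)
        fix t assume "t < n"
        then have "j*n+t < (2*M)*n" using j by (intro blk_bound) auto
        then show "f(j*n+t) < r" using f by (simp add: mult.assoc)
      qed
      then show "g j \<in> C" unfolding C_def g_def by auto
    qed
    then obtain a e where ae: "e>0" "a + L*e < M" "e \<le> M" "\<forall>k\<le>L. g(a+k*e) = g a"
      using M by blast
    have blk: "f((a+k*e)*n + t) = f(a*n+t)" if "k \<le> L" "t < n" for k t
      using ae(4)[rule_format, OF that(1)] that(2) unfolding g_def by simp
    define fa where "fa t = f(a*n+t)" for t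
    have aM: "a < 2*M" using ae by linarith
    have inN: "a*n + t < 2*M*n" if "t < n" for t
      using blk_bound[OF aM that] by (simp add: mult.assoc)
    have "\<forall>t<n. fa t < r" unfolding fa_def using inN f by blast
    from mp[OF spec[OF n, of fa] this]
    show "(\<exists>x d. d>0 \<and> x + Suc L*d < 2*M*n \<and> (\<forall>k\<le>Suc L. f(x+k*d) = f x)) \<or>
   (\<exists>z xs ds. z < 2*M*n \<and> (\<forall>i<Suc s. ds i > 0 \<and> xs i + Suc L * ds i = z \<and>
        (\<forall>k\<le>L. f(xs i + k*ds i) = f(xs i))) \<and> inj_on (\<lambda>i. f (xs i)) {..<Suc s})"
    proof (elim disjE exE conjE)
      fix x d assume d: "0 < d" "x + Suc L * d < n" "\<forall>k\<le>Suc L. fa (x + k * d) = fa x"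
      have "a*n + x + Suc L * d < 2*M*n" using inN[OF d(2)] by simp
      moreover have "\<forall>k\<le>Suc L. f(a*n + x+k*d) = f (a*n+x)"
        using d(3) unfolding fa_def by (simp add: add.assoc)
      ultimately show ?thesis using d(1) by blast
    next
      fix z xs ds
      assume z: "z < n" and cfg: "\<forall>i<s. 0 < ds i \<and> xs i + Suc L * ds i = z \<and>
              (\<forall>k\<le>L. fa (xs i + k * ds i) = fa (xs i))"
        and inj: "inj_on (\<lambda>i. fa (xs i)) {..<s}"
      show ?thesis
      proof (cases "\<exists>i<s. fa z = fa (xs i)")
        case True
        then obtain i where i: "i < s" "fa z = fa (xs i)" by blast
        have "a*n + xs i + Suc L * ds i < 2*M*n" using inN[OF z] cfg i by (simp add: add.assoc)
        moreover have "\<forall>k\<le>Suc L. f(a*n + xs i+k*ds i) = f (a*n+xs i)"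
        proof (intro allI impI)
          fix k assume k: "k \<le> Suc L"
          show "f(a*n + xs i+k*ds i) = f (a*n+xs i)"
          proof (cases "k \<le> L")
            case True
            then show ?thesis using cfg i unfolding fa_def by (simp add: add.assoc)
          next
            case False
            then have "k = Suc L" using k by simp
            then show ?thesis using cfg i unfolding fa_def by (simp add: add.assoc)
          qed
        qed
        ultimately show ?thesis using cfg i by blast
      next
        case False
        define Z where "Z = (a + Suc L * e)*n + z"
        define xs' where "xs' i = (if i < s then a*n + xs i else a*n + z)" for i
        define ds' where "ds' i = (if i < s then ds i + e*n else e*n)" for i
        have npos: "n > 0" using z by simp
        have "a + Suc L * e < 2*M" using ae by simp
        from blk_bound[OF this z] have ZN: "Z < 2*M*n" unfolding Z_def by simp
        have col: "f (xs' i) = (if i < s then fa (xs i) else fa z)" for i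
          unfolding xs'_def fa_def by simp
        have cfg': "\<forall>i<Suc s. ds' i > 0 \<and> xs' i + Suc L * ds' i = Z \<and>
            (\<forall>k\<le>L. f(xs' i + k*ds' i) = f(xs' i))"
        proof (intro allI impI conjI)
          fix i assume i: "i < Suc s"
          show "ds' i > 0" unfolding ds'_def using ae(1) npos cfg by auto
          show "xs' i + Suc L * ds' i = Z"
          proof (cases "i < s")
            case True
            have "xs' i + Suc L * ds' i = a*n + (xs i + Suc L * ds i) + Suc L * e * n"
              unfolding xs'_def ds'_def using True by (simp add: algebra_simps)
            also have "\<dots> = Z" unfolding Z_def using cfg True by (simp add: algebra_simps)
            finally show ?thesis .
          next
            case False
            then show ?thesis unfolding xs'_def ds'_def Z_def by (simp add: algebra_simps)
          qed
          fix k assume k: "k \<le> L"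
          show "f(xs' i + k*ds' i) = f(xs' i)"
          proof (cases "i < s")
            case True
            have "k * ds i \<le> Suc L * ds i" using k by (intro mult_le_mono1) simp
            then have lt: "xs i + k * ds i < n" using cfg True z by force
            have "xs' i + k*ds' i = (a + k*e)*n + (xs i + k*ds i)"
              unfolding xs'_def ds'_def using True by (simp add: algebra_simps)
            then have "f(xs' i + k*ds' i) = fa (xs i + k*ds i)"
              using blk[OF k lt] unfolding fa_def by simp
            also have "\<dots> = fa (xs i)" using cfg True k by blast
            finally show ?thesis using col True by simp
          next
            case False
            have "xs' i + k*ds' i = (a + k*e)*n + z"
              unfolding xs'_def ds'_def using False by (simp add: algebra_simps)
            then show ?thesis using blk[OF k z] col False unfolding fa_def by simp
          qed
        qed
        have "inj_on (\<lambda>i. f (xs' i)) {..<Suc s}"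
        proof (rule inj_onI)
          fix i j assume i: "i \<in> {..<Suc s}" and j: "j \<in> {..<Suc s}"
            and eq: "f (xs' i) = f (xs' j)"
          show "i = j"
          proof (cases "i < s"; cases "j < s")
            assume "i < s" "j < s"
            then show ?thesis using eq col inj[unfolded inj_on_def] by auto
          next
            assume "i < s" "\<not> j < s"
            then show ?thesis using eq col False by auto
          next
            assume "\<not> i < s" "j < s"
            then show ?thesis using eq col False by (auto simp: eq_commute)
          next
            assume "\<not> i < s" "\<not> j < s"
            then show ?thesis using i j by auto
          qed
        qed
        then show ?thesis using ZN cfg' by blast
      qed
    qed
  qed
qed


lemma vdW:
  fixes L r :: nat
  shows "\<exists>N. \<forall>f::nat\<Rightarrow>nat. (\<forall>x<N. f x < r) \<longrightarrow>
      (\<exists>a e. e>0 \<and> a + L*e < N \<and> e \<le> N \<and> (\<forall>k\<le>L. f(a+k*e) = f a))"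
proof (induction L arbitrary: r)
  case 0
  show ?case by (rule exI[of _ 1]) auto
next
  case (Suc L)
  then have IH: "\<forall>r. \<exists>N. \<forall>f::nat\<Rightarrow>nat. (\<forall>x<N. f x < r) \<longrightarrow>
      (\<exists>a e. e>0 \<and> a + L*e < N \<and> e \<le> N \<and> (\<forall>k\<le>L. f(a+k*e) = f a))" by blast
  obtain N where N: "\<forall>f::nat\<Rightarrow>nat. (\<forall>x<N. f x < r) \<longrightarrow>
   (\<exists>x d. d>0 \<and> x + Suc L*d < N \<and> (\<forall>k\<le>Suc L. f(x+k*d) = f x)) \<or>
   (\<exists>z xs ds. z < N \<and> (\<forall>i<r. ds i > 0 \<and> xs i + Suc L * ds i = z \<and>
        (\<forall>k\<le>L. f(xs i + k*ds i) = f(xs i))) \<and> inj_on (\<lambda>i. f (xs i)) {..<r})"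
    using focus[OF IH, of r r] by blast
  show ?case
  proof (rule exI[of _ N], intro allI impI)
    fix f :: "nat \<Rightarrow> nat" assume f: "\<forall>x<N. f x < r"
    from mp[OF spec[OF N, of f] f]
    show "\<exists>a e. e>0 \<and> a + Suc L*e < N \<and> e \<le> N \<and> (\<forall>k\<le>Suc L. f(a+k*e) = f a)"
    proof (elim disjE exE conjE)
      fix x d assume "0 < d" "x + Suc L * d < N" "\<forall>k\<le>Suc L. f (x + k * d) = f x"
      moreover have "d \<le> N" using calculation(2) by simp
      ultimately show ?thesis by blast
    next
      fix z xs ds
      assume z: "z < N" and cfg: "\<forall>i<r. 0 < ds i \<and> xs i + Suc L * ds i = z \<and>
              (\<forall>k\<le>L. f (xs i + k * ds i) = f (xs i))"
        and inj: "inj_on (\<lambda>i. f (xs i)) {..<r}"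
      have sub: "(\<lambda>i. f (xs i)) ` {..<r} \<subseteq> {..<r}"
      proof
        fix c assume "c \<in> (\<lambda>i. f (xs i)) ` {..<r}"
        then obtain i where i: "i < r" "c = f (xs i)" by auto
        have "xs i + Suc L * ds i = z" using conjunct1[OF conjunct2[OF cfg[rule_format, OF i(1)]]] .
        then have "xs i \<le> z" by linarith
        then show "c \<in> {..<r}" using f z i by auto
      qed
      have cr: "card ((\<lambda>i. f (xs i)) ` {..<r}) = card {..<r}" using card_image[OF inj] by simp
      have eqr: "(\<lambda>i. f (xs i)) ` {..<r} = {..<r}"
        by (rule card_subset_eq[OF finite_lessThan sub cr])
      have "f z \<in> {..<r}" using f z by simp
      then have "f z \<in> (\<lambda>i. f (xs i)) ` {..<r}" by (simp only: eqr)
      then obtain i where i0: "f z = f (xs i)" "i \<in> {..<r}" by (rule imageE)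
      then have i: "i < r" "f z = f (xs i)" by auto
      have "\<forall>k\<le>Suc L. f(xs i + k*ds i) = f (xs i)"
      proof (intro allI impI)
        fix k assume k: "k \<le> Suc L"
        show "f(xs i + k*ds i) = f (xs i)"
        proof (cases "k \<le> L")
          case True then show ?thesis using cfg i by blast
        next
          case False then have "k = Suc L" using k by simp
          then show ?thesis using cfg i by simp
        qed
      qed
      moreover have zi: "xs i + Suc L * ds i = z" "ds i > 0"
        using conjunct1[OF conjunct2[OF cfg[rule_format, OF i(1)]]] conjunct1[OF cfg[rule_format, OF i(1)]] by auto
      moreover have "ds i \<le> Suc L * ds i" by simp
      moreover have "xs i + Suc L * ds i < N" "ds i \<le> N" using z zi calculation by linarith+
      ultimately show ?thesis by blast
    qed
  qed
qed

lemma poly_from_AP: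
  fixes m K c e :: nat and d l :: "nat \<Rightarrow> nat" and A :: "nat set"
  assumes d: "\<forall>i\<in>{1..m}. d i \<ge> 1 \<and> l i \<ge> 1"
    and K: "K = (\<Sum>i\<in>{1..m}. l i ^ d i)"
    and e: "e > 0"
    and AP: "\<forall>k\<le>K. c + k*e \<in> A"
  shows "\<exists>P :: nat \<Rightarrow> nat poly.
               (\<forall>i\<in>{1..m}. degree (P i) = d i) \<and>
               (\<forall>i\<in>{1..m}. \<forall>j\<in>{1..l i}. poly (P i) j \<in> A)"
proof (rule exI[of _ "\<lambda>i. monom e (d i) + [:c:]"], intro conjI ballI)
  fix i assume i: "i \<in> {1..m}"
  have "degree (monom e (d i)) = d i" using e by (simp add: degree_monom_eq)
  moreover have "degree [:c:] < d i" using d i by force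
  ultimately show "degree (monom e (d i) + [:c:]) = d i"
    by (metis degree_add_eq_left)
next
  fix i j assume i: "i \<in> {1..m}" and j: "j \<in> {1..l i}"
  have "j ^ d i \<le> l i ^ d i" using j by (intro power_mono) auto
  also have "\<dots> \<le> K" unfolding K using i by (intro member_le_sum) auto
  finally have "c + j ^ d i * e \<in> A" using AP by blast
  moreover have "poly (monom e (d i) + [:c:]) j = c + j ^ d i * e" by (simp add: poly_monom add.commute)
  ultimately show "poly (monom e (d i) + [:c:]) j \<in> A" by (simp only:)
qed

theorem mainTheorem5:
  fixes m :: nat and d l :: "nat \<Rightarrow> nat"
  assumes "m \<ge> 1"
    and "\<forall>i\<in>{1..m}. d i \<ge> 1 \<and> l i \<ge> 1"
  shows "(\<forall>\<P>. finite_partition_of_N \<P> \<longrightarrow>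
            (\<exists>P :: nat \<Rightarrow> nat poly. \<exists>A\<in>\<P>.
               (\<forall>i\<in>{1..m}. degree (P i) = d i) \<and>
               (\<forall>i\<in>{1..m}. \<forall>j\<in>{1..l i}. poly (P i) j \<in> A)))
       \<and> (\<forall>A. piecewise_syndetic A \<longrightarrow>
            (\<exists>P :: nat \<Rightarrow> nat poly.
               (\<forall>i\<in>{1..m}. degree (P i) = d i) \<and>
               (\<forall>i\<in>{1..m}. \<forall>j\<in>{1..l i}. poly (P i) j \<in> A)))"
proof (intro conjI allI impI)
  define K where "K = (\<Sum>i\<in>{1..m}. l i ^ d i)"
  {
    fix Q :: "nat set set" assume Q: "finite_partition_of_N Q"
    then have finQ: "finite Q" and unQ: "\<Union>Q = {1..}" unfolding finite_partition_of_N_def by auto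
    define col where "col x = (SOME B. B \<in> Q \<and> Suc x \<in> B)" for x
    have colQ: "col x \<in> Q \<and> Suc x \<in> col x" for x
    proof -
      have "Suc x \<in> \<Union>Q" using unQ by simp
      then have "\<exists>B. B \<in> Q \<and> Suc x \<in> B" by blast
      then show ?thesis unfolding col_def by (rule someI_ex)
    qed
    obtain N where N: "\<forall>f::nat\<Rightarrow>nat set. (\<forall>x<N. f x \<in> Q) \<longrightarrow>
      (\<exists>a e. e>0 \<and> a + K*e < N \<and> e \<le> N \<and> (\<forall>k\<le>K. f(a+k*e) = f a))"
      using vdW_gen[OF allI[OF vdW[where L=K]] finQ] by blast
    have "\<forall>x<N. col x \<in> Q" using colQ by blast
    from mp[OF spec[OF N, of col] this] obtain a e where ae: "e>0" "\<forall>k\<le>K. col(a+k*e) = col a"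
      by blast
    have "\<forall>k\<le>K. Suc a + k*e \<in> col a"
    proof (intro allI impI)
      fix k assume "k \<le> K"
      have "Suc (a+k*e) \<in> col(a+k*e)" using colQ by blast
      then show "Suc a + k*e \<in> col a" using ae(2) \<open>k \<le> K\<close> by simp
    qed
    from poly_from_AP[OF assms(2) K_def ae(1) this] colQ[of a]
    show "\<exists>P :: nat \<Rightarrow> nat poly. \<exists>A\<in>Q.
               (\<forall>i\<in>{1..m}. degree (P i) = d i) \<and>
               (\<forall>i\<in>{1..m}. \<forall>j\<in>{1..l i}. poly (P i) j \<in> A)" by blast
  }
  {
    fix A assume "piecewise_syndetic A"
    then obtain b where b: "\<forall>n\<ge>1. \<exists>x\<ge>1. \<forall>y\<in>{x..x+n}. {y..y+b} \<inter> A \<noteq> {}"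
      unfolding piecewise_syndetic_def by blast
    obtain N where N: "\<forall>f::nat\<Rightarrow>nat. (\<forall>x<N. f x < Suc b) \<longrightarrow>
      (\<exists>a e. e>0 \<and> a + K*e < N \<and> e \<le> N \<and> (\<forall>k\<le>K. f(a+k*e) = f a))"
      using vdW[where L=K and r="Suc b"] by blast
    obtain x where x: "\<forall>y\<in>{x..x+max 1 N}. {y..y+b} \<inter> A \<noteq> {}" using b[rule_format, of "max 1 N"] by auto
    define col where "col t = (LEAST u. x + t + u \<in> A)" for t
    have colA: "x + t + col t \<in> A \<and> col t < Suc b" if "t < N" for t
    proof -
      have "{x+t..x+t+b} \<inter> A \<noteq> {}" using x that by auto
      then obtain y where y: "y \<in> A" "x+t \<le> y" "y \<le> x+t+b" by auto
      have ex: "x + t + (y - (x+t)) \<in> A" using y by simp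
      have "x + t + col t \<in> A" unfolding col_def by (rule LeastI[where P="\<lambda>u. x + t + u \<in> A", OF ex])
      moreover have "col t \<le> y - (x+t)" unfolding col_def by (rule Least_le[where P="\<lambda>u. x + t + u \<in> A", OF ex])
      ultimately show ?thesis using y by simp
    qed
    have "\<forall>t<N. col t < Suc b" using colA by blast
    from mp[OF spec[OF N, of col] this] obtain a e where ae: "e>0" "a + K*e < N" "\<forall>k\<le>K. col(a+k*e) = col a"
      by blast
    have "\<forall>k\<le>K. (x + a + col a) + k*e \<in> A"
    proof (intro allI impI)
      fix k assume k: "k \<le> K"
      have "k*e \<le> K*e" using k by (rule mult_le_mono1)
      then have "a + k*e < N" using ae by linarith
      then have "x + (a + k*e) + col (a+k*e) \<in> A" using colA by blast
      moreover have "col (a+k*e) = col a" using ae(3) k by blast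
      moreover have "x + (a + k*e) + col a = (x + a + col a) + k*e" by simp
      ultimately show "(x + a + col a) + k*e \<in> A" by simp
    qed
    from poly_from_AP[OF assms(2) K_def ae(1) this]
    show "\<exists>P :: nat \<Rightarrow> nat poly.
               (\<forall>i\<in>{1..m}. degree (P i) = d i) \<and>
               (\<forall>i\<in>{1..m}. \<forall>j\<in>{1..l i}. poly (P i) j \<in> A)" .
  }
qed

end
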